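(* Let $X$ be a real Banach space with $\dim X\ge 2$. Then $J(X)\,S_P(X)\ge C'_{NJ}(X)-1$.
   Context: For a real Banach space $X$ with unit sphere $S_X$, the P-angle constant is $S_P(X)=\sup\left\{\frac{\|x+y\|^2+\|x-y\|^2-4}{2\|x+y\|\,\|x-y\|}: x,y\in S_X,\ x\neq \pm y\right\}$. The James constant is $J(X)=\sup\{\min\{\|x+y\|,\|x-y\|\}: x,y\in S_X\}$, and the modified von Neumann–Jordan constant is $C'_{NJ}(X)=\sup\left\{\frac{\|x+y\|^2+\|x-y\|^2}{4}: x,y\in S_X\right\}$. *)

theory Defs
  imports "HOL-Analysis.Analysis"
begin

definition unit_sphere :: "'a::real_normed_vector set" where
  "unit_sphere = {x. norm x = 1}"

definition P_angle_const :: "'a::real_normed_vector itself \<Rightarrow> real" where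
  "P_angle_const _ = Sup {(norm (x + y) ^ 2 + norm (x - y) ^ 2 - 4) / (2 * norm (x + y) * norm (x - y)) | x y :: 'a.
      x \<in> unit_sphere \<and> y \<in> unit_sphere \<and> x \<noteq> y \<and> x \<noteq> - y}"

definition James_const :: "'a::real_normed_vector itself \<Rightarrow> real" where
  "James_const _ = Sup {min (norm (x + y)) (norm (x - y)) | x y :: 'a.
      x \<in> unit_sphere \<and> y \<in> unit_sphere}"

definition modified_vNJ_const :: "'a::real_normed_vector itself \<Rightarrow> real" where
  "modified_vNJ_const _ = Sup {(norm (x + y) ^ 2 + norm (x - y) ^ 2) / 4 | x y :: 'a.
      x \<in> unit_sphere \<and> y \<in> unit_sphere}"

end

theory Submission imports Defs begin

lemma two_indep:
  assumes "\<exists>B :: 'a::real_normed_vector set. independent B \<and> card B = 2"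
  obtains p q :: "'a::real_normed_vector" where "\<And>c d. c *\<^sub>R p + d *\<^sub>R q = 0 \<Longrightarrow> c = 0 \<and> d = 0"
proof -
  obtain B :: "'a set" where B: "independent B" "card B = 2" using assms by blast
  then obtain p q where pq: "B = {p, q}" "p \<noteq> q" by (meson card_2_iff)
  have q0: "q \<noteq> 0" and ps: "p \<notin> span {q}"
    using B(1) pq by (auto simp: independent_insert)
  have "c = 0 \<and> d = 0" if h: "c *\<^sub>R p + d *\<^sub>R q = 0" for c d
  proof (cases "c = 0")
    case True then show ?thesis using h q0 by simp
  next
    case False
    have "c *\<^sub>R p = - (d *\<^sub>R q)" using h by (simp add: eq_neg_iff_add_eq_0)
    hence "(1/c) *\<^sub>R (c *\<^sub>R p) = (1/c) *\<^sub>R (- (d *\<^sub>R q))" by simp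
    hence "p = (- d / c) *\<^sub>R q" using False by simp
    hence "p \<in> span {q}" unfolding span_singleton by (metis rangeI)
    with ps show ?thesis by simp
  qed
  then show ?thesis using that by blast
qed

lemma eq_pair:
  fixes p q :: "'a::real_normed_vector"
  assumes ind: "\<And>c d. c *\<^sub>R p + d *\<^sub>R q = 0 \<Longrightarrow> c = 0 \<and> d = 0"
  obtains x y :: "'a::real_normed_vector" where "norm x = 1" "norm y = 1" "norm (x + y) = norm (x - y)"
proof -
  have p0: "p \<noteq> 0" using ind[of 1 0] by auto
  define x where "x = p /\<^sub>R norm p"
  have nx: "norm x = 1" using p0 by (simp add: x_def)
  define w where "w t = (1 - 2*t) *\<^sub>R x + (t - t^2) *\<^sub>R q" for t :: real
  have w0: "w t \<noteq> 0" for t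
  proof
    assume "w t = 0"
    hence "((1 - 2*t) / norm p) *\<^sub>R p + (t - t^2) *\<^sub>R q = 0"
      by (simp add: w_def x_def divide_inverse_commute mult.commute)
    from ind[OF this] p0 have "1 - 2*t = 0" "t - t^2 = 0" by auto
    thus False by (simp add: power2_eq_square algebra_simps)
  qed
  define f where "f t = norm (x + w t /\<^sub>R norm (w t)) - norm (x - w t /\<^sub>R norm (w t))" for t
  have cw: "continuous_on {0..1} w" unfolding w_def by (intro continuous_intros)
  have cf: "continuous_on {0..1} f" unfolding f_def
    using w0 by (intro continuous_intros cw) auto
  have f0: "f 0 = 2" using nx by (simp add: f_def w_def flip: scaleR_2)
  have f1: "f 1 = -2" using nx by (simp add: f_def w_def flip: scaleR_2)
  have "\<exists>t. 0 \<le> t \<and> t \<le> 1 \<and> f t = 0" by (rule IVT2') (use f0 f1 cf in auto)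
  then obtain t where "f t = 0" by blast
  moreover have "norm (w t /\<^sub>R norm (w t)) = 1" using w0[of t] by simp
  ultimately show ?thesis using that[of x "w t /\<^sub>R norm (w t)"] nx by (simp add: f_def)
qed
lemma norm_pm_le2:
  fixes x y :: "'a::real_normed_vector"
  assumes "norm x = 1" "norm y = 1"
  shows "norm (x + y) \<le> 2" "norm (x - y) \<le> 2"
  using norm_triangle_ineq[of x y] norm_triangle_ineq4[of x y] assms by auto

lemma term_le_half:
  fixes x y :: "'a::real_normed_vector"
  assumes "norm x = 1" "norm y = 1" "x \<noteq> y" "x \<noteq> - y"
  shows "(norm (x + y) ^ 2 + norm (x - y) ^ 2 - 4) / (2 * norm (x + y) * norm (x - y)) \<le> 1/2"
proof -
  define a where "a = norm (x + y)"
  define b where "b = norm (x - y)"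
  have a2: "a \<le> 2" and b2: "b \<le> 2" using norm_pm_le2[OF assms(1,2)] by (auto simp: a_def b_def)
  have ap: "a > 0" using assms(4) by (auto simp: a_def add_eq_0_iff)
  have bp: "b > 0" using assms(3) by (auto simp: b_def)
  have "a^2 \<le> 2^2" by (rule power_mono) (use a2 ap in auto)
  moreover have "b^2 \<le> 2^2" by (rule power_mono) (use b2 bp in auto)
  ultimately have "a^2 + b^2 - 4 \<le> min (a^2) (b^2)" by auto
  also have "\<dots> \<le> a * b" using ap bp
    by (smt (verit) mult_right_mono mult_left_mono power2_eq_square)
  finally have "a^2 + b^2 - 4 \<le> a * b" .
  hence "(a^2 + b^2 - 4) / (2 * a * b) \<le> 1/2" using ap bp by (simp add: divide_le_eq)
  thus ?thesis by (simp add: a_def b_def)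
qed

lemma SP_bdd: "bdd_above {(norm (x + y) ^ 2 + norm (x - y) ^ 2 - 4) / (2 * norm (x + y) * norm (x - y)) | x y :: 'a::real_normed_vector.
      x \<in> unit_sphere \<and> y \<in> unit_sphere \<and> x \<noteq> y \<and> x \<noteq> - y}"
proof (rule bdd_aboveI[where M="1/2"])
  fix z assume "z \<in> {(norm (x + y) ^ 2 + norm (x - y) ^ 2 - 4) / (2 * norm (x + y) * norm (x - y)) | x y :: 'a.
      x \<in> unit_sphere \<and> y \<in> unit_sphere \<and> x \<noteq> y \<and> x \<noteq> - y}"
  then obtain x y :: 'a where "norm x = 1" "norm y = 1" "x \<noteq> y" "x \<noteq> - y"
    "z = (norm (x + y) ^ 2 + norm (x - y) ^ 2 - 4) / (2 * norm (x + y) * norm (x - y))"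
    by (auto simp: unit_sphere_def)
  thus "z \<le> 1/2" using term_le_half by blast
qed

lemma J_bdd: "bdd_above {min (norm (x + y)) (norm (x - y)) | x y :: 'a::real_normed_vector.
      x \<in> unit_sphere \<and> y \<in> unit_sphere}"
  by (rule bdd_aboveI[where M=2]) (auto simp: unit_sphere_def dest: norm_pm_le2 intro: min.coboundedI1)

lemma SP_ge:
  fixes x y :: "'a::real_normed_vector"
  assumes "norm x = 1" "norm y = 1" "x \<noteq> y" "x \<noteq> - y"
  shows "(norm (x + y) ^ 2 + norm (x - y) ^ 2 - 4) / (2 * norm (x + y) * norm (x - y)) \<le> P_angle_const TYPE('a)"
  unfolding P_angle_const_def
  by (rule cSup_upper[OF _ SP_bdd]) (use assms in \<open>auto simp: unit_sphere_def\<close>)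

lemma J_ge:
  fixes x y :: "'a::real_normed_vector"
  assumes "norm x = 1" "norm y = 1"
  shows "min (norm (x + y)) (norm (x - y)) \<le> James_const TYPE('a)"
  unfolding James_const_def
  by (rule cSup_upper[OF _ J_bdd]) (use assms in \<open>auto simp: unit_sphere_def\<close>)

lemma SP_nonneg:
  fixes p q :: "'a::real_normed_vector"
  assumes ind: "\<And>c d. c *\<^sub>R p + d *\<^sub>R q = 0 \<Longrightarrow> c = 0 \<and> d = 0"
  shows "0 \<le> P_angle_const TYPE('a)"
proof -
  obtain x y :: 'a where nx: "norm x = 1" and ny: "norm y = 1" and eq: "norm (x + y) = norm (x - y)"
    using eq_pair[OF ind] by blast
  define a where "a = norm (x + y)"
  have ap: "a > 0"
  proof (rule ccontr)
    assume "\<not> a > 0"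
    hence "x + y = 0" "x - y = 0" using eq by (auto simp: a_def)
    moreover have "(x + y) + (x - y) = 2 *\<^sub>R x" by (simp add: scaleR_2)
    ultimately have "x = 0" by simp
    thus False using nx by simp
  qed
  have "\<exists>u v :: 'a. norm u = 1 \<and> norm v = 1 \<and> u \<noteq> v \<and> u \<noteq> - v \<and> norm (u + v) ^ 2 + norm (u - v) ^ 2 \<ge> 4"
  proof (cases "a^2 \<ge> 2")
    case True
    have "x \<noteq> y" using ap eq by (auto simp: a_def)
    moreover have "x \<noteq> - y" using ap by (auto simp: a_def)
    ultimately show ?thesis using nx ny True eq a_def by (intro exI[of _ x] exI[of _ y]) auto
  next
    case False
    define u where "u = (x + y) /\<^sub>R a"
    define v where "v = (x - y) /\<^sub>R a"
    have nu: "norm u = 1" using ap by (simp add: u_def a_def)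
    have nv: "norm v = 1" using ap eq by (simp add: v_def a_def)
    have e1: "(x + y) + (x - y) = 2 *\<^sub>R x" by (simp add: scaleR_2)
    have e2: "(x + y) - (x - y) = 2 *\<^sub>R y" by (simp add: scaleR_2)
    have "u + v = inverse a *\<^sub>R ((x + y) + (x - y))" unfolding u_def v_def
      by (rule scaleR_add_right[symmetric])
    hence nuv: "norm (u + v) = 2 / a" using nx ap e1 by (simp add: divide_inverse mult.commute)
    have "u - v = inverse a *\<^sub>R ((x + y) - (x - y))" unfolding u_def v_def
      by (rule scaleR_diff_right[symmetric])
    hence nuv2: "norm (u - v) = 2 / a" using ny ap e2 by (simp add: divide_inverse mult.commute)
    have "u \<noteq> v" using nuv2 ap by auto
    moreover have "u \<noteq> - v" using nuv ap by auto
    moreover have "norm (u + v) ^ 2 + norm (u - v) ^ 2 \<ge> 4"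
    proof -
      have "a^2 \<le> 2" using False by simp
      hence "8 / a^2 \<ge> 4" using ap by (simp add: le_divide_eq)
      thus ?thesis using nuv nuv2 by (simp add: power_divide)
    qed
    ultimately show ?thesis using nu nv by blast
  qed
  then obtain u v :: 'a where uv: "norm u = 1" "norm v = 1" "u \<noteq> v" "u \<noteq> - v"
    "norm (u + v) ^ 2 + norm (u - v) ^ 2 \<ge> 4" by blast
  have "0 \<le> (norm (u + v) ^ 2 + norm (u - v) ^ 2 - 4) / (2 * norm (u + v) * norm (u - v))"
    using uv(5) by (intro divide_nonneg_nonneg) auto
  also have "\<dots> \<le> P_angle_const TYPE('a)" using SP_ge[OF uv(1-4)] .
  finally show ?thesis .
qed

theorem mainTheorem5:
  assumes "\<exists>B :: 'a::banach set. independent B \<and> card B = 2"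
  shows "James_const TYPE('a) * P_angle_const TYPE('a) \<ge> modified_vNJ_const TYPE('a) - 1"
proof -
  obtain p q :: 'a where ind: "\<And>c d. c *\<^sub>R p + d *\<^sub>R q = 0 \<Longrightarrow> c = 0 \<and> d = 0"
    using two_indep[OF assms] by blast
  define J where "J = James_const TYPE('a)"
  define S where "S = P_angle_const TYPE('a)"
  have S0: "0 \<le> S" unfolding S_def by (rule SP_nonneg[OF ind])
  have p0: "p \<noteq> 0" using ind[of 1 0] by auto
  define e where "e = p /\<^sub>R norm p"
  have ne: "norm e = 1" using p0 by (simp add: e_def)
  have J0: "0 \<le> J" using J_ge[OF ne ne] unfolding J_def by simp
  have "modified_vNJ_const TYPE('a) \<le> J * S + 1"
    unfolding modified_vNJ_const_def
  proof (rule cSup_least)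
    show "{(norm (x + y) ^ 2 + norm (x - y) ^ 2) / 4 | x y :: 'a.
      x \<in> unit_sphere \<and> y \<in> unit_sphere} \<noteq> {}"
    proof -
      have "(norm (e + e) ^ 2 + norm (e - e) ^ 2) / 4 \<in> {(norm (x + y) ^ 2 + norm (x - y) ^ 2) / 4 | x y :: 'a.
        x \<in> unit_sphere \<and> y \<in> unit_sphere}" using ne unfolding unit_sphere_def by blast
      thus ?thesis by blast
    qed
  next
    fix z assume "z \<in> {(norm (x + y) ^ 2 + norm (x - y) ^ 2) / 4 | x y :: 'a.
      x \<in> unit_sphere \<and> y \<in> unit_sphere}"
    then obtain x y :: 'a where nx: "norm x = 1" and ny: "norm y = 1"
      and z: "z = (norm (x + y) ^ 2 + norm (x - y) ^ 2) / 4" by (auto simp: unit_sphere_def)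
    define a where "a = norm (x + y)"
    define b where "b = norm (x - y)"
    show "z \<le> J * S + 1"
    proof (cases "a^2 + b^2 \<le> 4")
      case True
      have "0 \<le> J * S" using J0 S0 by simp
      then show ?thesis using z True by (simp add: a_def b_def)
    next
      case False
      have "x \<noteq> y"
      proof
        assume "x = y"
        hence "a = 2" "b = 0" using nx by (auto simp: a_def b_def simp flip: scaleR_2)
        thus False using False by simp
      qed
      moreover have "x \<noteq> - y"
      proof
        assume "x = - y"
        moreover have "- y - y = - (2 *\<^sub>R y)" by (simp add: scaleR_2)
        ultimately have "a = 0" "b = 2" using ny by (auto simp: a_def b_def)
        thus False using False by simp
      qed
      ultimately have tS: "(a^2 + b^2 - 4) / (2 * a * b) \<le> S"
        using SP_ge[OF nx ny] unfolding S_def a_def b_def by blast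
      have mJ: "min a b \<le> J" using J_ge[OF nx ny] unfolding J_def a_def b_def .
      have a2: "a \<le> 2" and b2: "b \<le> 2" using norm_pm_le2[OF nx ny] by (auto simp: a_def b_def)
      have ap: "a > 0" using \<open>x \<noteq> - y\<close> by (auto simp: a_def add_eq_0_iff)
      have bp: "b > 0" using \<open>x \<noteq> y\<close> by (auto simp: b_def)
      define t where "t = (a^2 + b^2 - 4) / (2 * a * b)"
      have t0: "t \<ge> 0" using False ap bp by (simp add: t_def)
      have "(a^2 + b^2 - 4) / 4 = t * (a * b / 2)" using ap bp by (simp add: t_def field_simps)
      also have "\<dots> \<le> t * min a b"
      proof (rule mult_left_mono[OF _ t0])
        show "a * b / 2 \<le> min a b"
        proof (cases "a \<le> b")
          case True
          have "a * b \<le> a * 2" using b2 ap by (intro mult_left_mono) auto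
          thus ?thesis using True by auto
        next
          case False
          have "a * b \<le> 2 * b" using a2 bp by (intro mult_right_mono) auto
          thus ?thesis using False by auto
        qed
      qed
      also have "\<dots> \<le> S * J"
        using tS mJ t0 J0 S0 ap bp unfolding t_def by (intro mult_mono) auto
      finally have "(a^2 + b^2 - 4) / 4 \<le> J * S" by (simp only: mult.commute)
      moreover have "z = (a^2 + b^2 - 4) / 4 + 1" using z unfolding a_def b_def by (simp add: field_simps)
      ultimately show ?thesis by linarith
    qed
  qed
  thus ?thesis unfolding J_def S_def by simp
qed

end
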